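(* For every digraph $X$, the number of Hamiltonian paths of $X$ and the number of Hamiltonian paths of its complementary digraph $\overline{X}$ have the same parity.
   Context: A digraph $X=(V,E)$: $V$ finite, $E\subset\{(u,v)\in V\times V\mid u\ne v\}$; $\overline{X}=(V,E^c)$ with $(u,v)\in E^c$ iff $u\ne v$ and $(u,v)\notin E$. A Hamiltonian path of $X$ is a listing $(\sigma_1,\dots,\sigma_n)$ of all vertices of $V$ without repetition ($n=|V|$) such that $(\sigma_j,\sigma_{j+1})\in E$ for all $j=1,\dots,n-1$. *)

theory Defs
  imports Main
begin

definition digraph :: "'a set \<Rightarrow> ('a \<times> 'a) set \<Rightarrow> bool" where
  "digraph V E \<longleftrightarrow> finite V \<and> E \<subseteq> {(u, v). u \<in> V \<and> v \<in> V \<and> u \<noteq> v}"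

definition compl_edges :: "'a set \<Rightarrow> ('a \<times> 'a) set \<Rightarrow> ('a \<times> 'a) set" where
  "compl_edges V E = {(u, v). u \<in> V \<and> v \<in> V \<and> u \<noteq> v \<and> (u, v) \<notin> E}"

definition ham_paths :: "'a set \<Rightarrow> ('a \<times> 'a) set \<Rightarrow> 'a list set" where
  "ham_paths V E = {xs. distinct xs \<and> set xs = V \<and>
      (\<forall>j. Suc j < length xs \<longrightarrow> (xs ! j, xs ! Suc j) \<in> E)}"

end

theory Submission
  imports Defs "HOL-Combinatorics.Multiset_Permutations"
begin

definition HP :: "'a set \<Rightarrow> ('a \<times> 'a) set \<Rightarrow> 'a list set" where
  "HP V F = {xs. distinct xs \<and> set xs = V \<and> successively (\<lambda>x y. (x,y)\<in>F) xs}"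

definition offd :: "'a set \<Rightarrow> ('a \<times> 'a) set" where
  "offd V = {(u, v). u \<in> V \<and> v \<in> V \<and> u \<noteq> v}"

definition uses :: "'a \<Rightarrow> 'a \<Rightarrow> 'a list \<Rightarrow> bool" where
  "uses u v xs \<longleftrightarrow> (\<exists>ys zs. xs = ys @ u # v # zs)"

definition con :: "('a \<times> 'a) set \<Rightarrow> 'a \<Rightarrow> 'a \<Rightarrow> ('a \<times> 'a) set" where
  "con F u v = {(x,y). if y = v then (x,u)\<in>F else (x,y)\<in>F}"

lemma ham_HP: "ham_paths V F = HP V F"
  unfolding ham_paths_def HP_def successively_conv_nth by simp

lemma succ_restrict:
  "distinct xs \<Longrightarrow> set xs \<subseteq> V \<Longrightarrow> F \<inter> offd V = G \<inter> offd V \<Longrightarrow>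
   successively (\<lambda>x y. (x,y)\<in>F) xs = successively (\<lambda>x y. (x,y)\<in>G) xs"
proof (induction xs rule: induct_list012)
  case (3 x y zs)
  have "(x,y) \<in> offd V" using 3(3,4) by (auto simp: offd_def)
  hence "(x,y)\<in>F \<longleftrightarrow> (x,y)\<in>G" using 3(5) by blast
  moreover have "successively (\<lambda>x y. (x,y)\<in>F) (y#zs) = successively (\<lambda>x y. (x,y)\<in>G) (y#zs)"
    using 3 by auto
  ultimately show ?case by simp
qed auto

lemma HP_restrict:
  assumes "F \<inter> offd V = G \<inter> offd V" shows "HP V F = HP V G"
  unfolding HP_def using succ_restrict[OF _ _ assms] by blast

lemma finite_HP: "finite (HP V F)"
  by (rule finite_subset[OF _ finite_permutations_of_set[of V]])
     (auto simp: HP_def permutations_of_set_def)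

lemma succ_uses: "successively P xs \<Longrightarrow> uses u v xs \<Longrightarrow> P u v"
  unfolding uses_def by (auto simp: successively_append_iff)

lemma succ_not_uses:
  "successively (\<lambda>x y. (x,y)\<in>insert (u,v) F) xs \<Longrightarrow> \<not> uses u v xs \<Longrightarrow>
   successively (\<lambda>x y. (x,y)\<in>F) xs"
proof (induction xs rule: induct_list012)
  case (3 x y zs)
  have "(x,y) \<noteq> (u,v)"
  proof
    assume "(x,y) = (u,v)"
    hence "uses u v (x#y#zs)" unfolding uses_def by (rule_tac x="[]" in exI) auto
    with 3 show False by simp
  qed
  moreover have "\<not> uses u v (y#zs)"
  proof
    assume "uses u v (y#zs)"
    then obtain ys ws where "y#zs = ys @ u # v # ws" unfolding uses_def by blast
    hence "uses u v (x#y#zs)" unfolding uses_def by (rule_tac x="x#ys" in exI) auto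
    with 3 show False by simp
  qed
  ultimately show ?case using 3 by auto
qed auto

lemma split_unique:
  "v \<notin> set ys1 \<Longrightarrow> v \<notin> set ys2 \<Longrightarrow> ys1 @ v # zs1 = ys2 @ v # zs2 \<Longrightarrow> ys1 = ys2 \<and> zs1 = zs2"
proof (induction ys1 arbitrary: ys2)
  case Nil then show ?case by (cases ys2) auto
next
  case (Cons a ys1) then show ?case by (cases ys2) auto
qed

lemma partition_card:
  assumes "(u,v) \<notin> F"
  shows "card (HP V (insert (u,v) F)) = card (HP V F) + card {xs\<in>HP V (insert (u,v) F). uses u v xs}"
proof -
  have eq: "HP V F = {xs\<in>HP V (insert (u,v) F). \<not> uses u v xs}"
  proof (rule set_eqI, rule iffI)
    fix xs assume xs: "xs \<in> HP V F"
    hence "\<not> uses u v xs" using succ_uses[of "\<lambda>x y. (x,y)\<in>F" xs u v] assms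
      by (auto simp add: HP_def)
    moreover have "successively (\<lambda>x y. (x,y)\<in>insert (u,v) F) xs"
      proof -
      have "successively (\<lambda>x y. (x,y)\<in>F) xs" using xs by (simp add: HP_def)
      thus ?thesis by (rule successively_mono) simp
    qed
    hence "xs \<in> HP V (insert (u,v) F)" using xs unfolding HP_def by simp
    ultimately show "xs \<in> {xs\<in>HP V (insert (u,v) F). \<not> uses u v xs}" by simp
  next
    fix xs assume "xs \<in> {xs\<in>HP V (insert (u,v) F). \<not> uses u v xs}"
    thus "xs \<in> HP V F" using succ_not_uses[of u v F xs] by (simp add: HP_def)
  qed
  have "card (HP V (insert (u,v) F)) = card {xs\<in>HP V (insert (u,v) F). \<not> uses u v xs}
        + card {xs\<in>HP V (insert (u,v) F). uses u v xs}"
  proof -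
    have "HP V (insert (u,v) F) = {xs\<in>HP V (insert (u,v) F). \<not> uses u v xs} \<union> {xs\<in>HP V (insert (u,v) F). uses u v xs}"
      by blast
    moreover have "card ({xs\<in>HP V (insert (u,v) F). \<not> uses u v xs} \<union> {xs\<in>HP V (insert (u,v) F). uses u v xs})
      = card {xs\<in>HP V (insert (u,v) F). \<not> uses u v xs} + card {xs\<in>HP V (insert (u,v) F). uses u v xs}"
      by (rule card_Un_disjoint) (auto intro: finite_subset[OF _ finite_HP])
    ultimately show ?thesis by simp
  qed
  thus ?thesis using eq by simp
qed

lemma contract_card:
  assumes V: "finite V" "u \<in> V" "v \<in> V" "u \<noteq> v" and e: "(u,v) \<in> F"
  shows "card {xs\<in>HP V F. uses u v xs} = card (HP (V - {u}) (con F u v))"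
proof -
  let ?A = "{xs\<in>HP V F. uses u v xs}" and ?B = "HP (V - {u}) (con F u v)"
  have dec: "\<exists>ys zs. xs = ys @ u # v # zs \<and> u \<notin> set ys \<and> u \<notin> set zs \<and> v \<notin> set ys \<and> v \<notin> set zs
     \<and> removeAll u xs = ys @ v # zs" if "xs \<in> ?A" for xs
  proof -
    from that obtain ys zs where xs: "xs = ys @ u # v # zs" unfolding uses_def by blast
    have "distinct xs" using that by (simp add: HP_def)
    hence "u \<notin> set ys" "u \<notin> set zs" "v \<notin> set ys" "v \<notin> set zs" using xs by auto
    moreover have "removeAll u xs = ys @ v # zs" using xs V(4) calculation by simp
    ultimately show ?thesis using xs by blast
  qed
  have "inj_on (removeAll u) ?A"
  proof
    fix xs1 xs2 assume a1: "xs1 \<in> ?A" and a2: "xs2 \<in> ?A" and eq: "removeAll u xs1 = removeAll u xs2"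
    obtain ys1 zs1 where 1: "xs1 = ys1 @ u # v # zs1" "v \<notin> set ys1" "removeAll u xs1 = ys1 @ v # zs1"
      using dec[OF a1] by blast
    obtain ys2 zs2 where 2: "xs2 = ys2 @ u # v # zs2" "v \<notin> set ys2" "removeAll u xs2 = ys2 @ v # zs2"
      using dec[OF a2] by blast
    have "ys1 @ v # zs1 = ys2 @ v # zs2" using eq 1(3) 2(3) by argo
    hence "ys1 = ys2 \<and> zs1 = zs2" using split_unique[OF 1(2) 2(2)] by blast
    thus "xs1 = xs2" using 1(1) 2(1) by blast
  qed
  moreover have "removeAll u ` ?A = ?B"
  proof (rule set_eqI, rule iffI)
    fix t assume "t \<in> removeAll u ` ?A"
    then obtain xs where xsA: "xs \<in> ?A" and t: "t = removeAll u xs" by blast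
    obtain ys zs where d: "xs = ys @ u # v # zs" "u \<notin> set ys" "u \<notin> set zs" "v \<notin> set ys"
      "v \<notin> set zs" "removeAll u xs = ys @ v # zs" using dec[OF xsA] by blast
    have H: "distinct xs" "set xs = V" "successively (\<lambda>x y. (x,y)\<in>F) xs" using xsA by (auto simp: HP_def)
    have s: "successively (\<lambda>x y. (x,y)\<in>F) ys" "successively (\<lambda>x y. (x,y)\<in>F) (v#zs)"
      "ys \<noteq> [] \<longrightarrow> (last ys, u) \<in> F"
      using H(3) unfolding d(1) by (auto simp: successively_append_iff)
    have s1: "successively (\<lambda>x y. (x,y)\<in>con F u v) ys"
      using s(1) by (rule successively_mono) (use d(4) in \<open>auto simp: con_def split: if_splits\<close>)
    have s2: "successively (\<lambda>x y. (x,y)\<in>con F u v) (v#zs)"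
      proof -
      have a: "zs = [] \<or> (v, hd zs) \<in> F \<and> successively (\<lambda>x y. (x,y)\<in>F) zs"
        using s(2) by (simp add: successively_Cons)
      show ?thesis
      proof (cases "zs = []")
        case True thus ?thesis by simp
      next
        case False
        hence "hd zs \<in> set zs" by simp
        hence hv: "hd zs \<noteq> v" using d(5) by blast
        have "successively (\<lambda>x y. (x,y)\<in>F) zs" using a False by blast
        hence "successively (\<lambda>x y. (x,y)\<in>con F u v) zs"
          by (rule successively_mono) (use d(5) in \<open>auto simp: con_def split: if_splits\<close>)
        moreover have "(v, hd zs) \<in> con F u v" using a False hv by (auto simp: con_def)
        ultimately show ?thesis using False by (simp add: successively_Cons)
      qed
    qed
    have s3: "ys \<noteq> [] \<longrightarrow> (last ys, v) \<in> con F u v" using s(3) by (auto simp: con_def)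
    have "successively (\<lambda>x y. (x,y)\<in>con F u v) (ys @ v # zs)"
      using s1 s2 s3 by (auto simp: successively_append_iff)
    moreover have "distinct (ys @ v # zs)" "set (ys @ v # zs) = V - {u}"
      using H(1,2) d by auto
    ultimately show "t \<in> ?B" using t d(6) by (simp add: HP_def)
  next
    fix t assume tB: "t \<in> ?B"
    have H: "distinct t" "set t = V - {u}" "successively (\<lambda>x y. (x,y)\<in>con F u v) t"
      using tB by (auto simp: HP_def)
    have "v \<in> set t" using H(2) V by auto
    then obtain ys zs where t: "t = ys @ v # zs" by (meson split_list)
    have vn: "v \<notin> set ys" "v \<notin> set zs" using H(1) t by auto
    have un: "u \<notin> set ys" "u \<notin> set zs" using H(2) t by auto
    have s: "successively (\<lambda>x y. (x,y)\<in>con F u v) ys" "successively (\<lambda>x y. (x,y)\<in>con F u v) (v#zs)"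
      "ys \<noteq> [] \<longrightarrow> (last ys, v) \<in> con F u v"
      using H(3) unfolding t by (auto simp: successively_append_iff)
    have s1: "successively (\<lambda>x y. (x,y)\<in>F) ys"
      using s(1) by (rule successively_mono) (use vn(1) in \<open>auto simp: con_def split: if_splits\<close>)
    have s2: "successively (\<lambda>x y. (x,y)\<in>F) (v#zs)"
      proof -
      have a: "zs = [] \<or> (v, hd zs) \<in> con F u v \<and> successively (\<lambda>x y. (x,y)\<in>con F u v) zs"
        using s(2) by (simp add: successively_Cons)
      show ?thesis
      proof (cases "zs = []")
        case True thus ?thesis by simp
      next
        case False
        hence "hd zs \<in> set zs" by simp
        hence hv: "hd zs \<noteq> v" using vn(2) by blast
        have "successively (\<lambda>x y. (x,y)\<in>con F u v) zs" using a False by blast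
        hence "successively (\<lambda>x y. (x,y)\<in>F) zs"
          by (rule successively_mono) (use vn(2) in \<open>auto simp: con_def split: if_splits\<close>)
        moreover have "(v, hd zs) \<in> F" using a False hv by (auto simp: con_def)
        ultimately show ?thesis using False by (simp add: successively_Cons)
      qed
    qed
    have s3: "ys \<noteq> [] \<longrightarrow> (last ys, u) \<in> F" using s(3) by (auto simp: con_def)
    let ?xs = "ys @ u # v # zs"
    have "successively (\<lambda>x y. (x,y)\<in>F) ?xs"
      using s1 s2 s3 e by (auto simp: successively_append_iff)
    moreover have "distinct ?xs" "set ?xs = V" using H(1,2) t un V by auto
    moreover have "uses u v ?xs" unfolding uses_def by blast
    moreover have "removeAll u ?xs = t" using un t V(4) by simp
    ultimately show "t \<in> removeAll u ` ?A" by (auto simp: HP_def intro!: image_eqI[of _ _ ?xs])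
  qed
  ultimately show ?thesis by (metis card_image)
qed


lemma HP_small:
  assumes "finite V" "card V \<le> 1" shows "HP V F = HP V G"
proof -
  have "successively P xs" if "distinct xs" "set xs = V" for P and xs :: "'a list"
  proof -
    have "length xs \<le> 1" using that assms distinct_card by metis
    thus ?thesis by (cases xs) auto
  qed
  thus ?thesis unfolding HP_def by blast
qed

lemma succ_offd: "distinct xs \<Longrightarrow> set xs \<subseteq> V \<Longrightarrow> successively (\<lambda>x y. (x,y)\<in>offd V) xs"
  by (induction xs rule: induct_list012) (auto simp: offd_def)

lemma HP_full: "offd V \<subseteq> F \<Longrightarrow> HP V F = permutations_of_set V"
proof -
  assume a: "offd V \<subseteq> F"
  have "successively (\<lambda>x y. (x,y)\<in>F) xs" if "distinct xs" "set xs = V" for xs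
  proof -
    have "successively (\<lambda>x y. (x,y)\<in>offd V) xs" using succ_offd that by blast
    thus ?thesis by (rule successively_mono) (use a in blast)
  qed
  thus ?thesis unfolding HP_def permutations_of_set_def by blast
qed

lemma HP_empty:
  assumes "finite V" "2 \<le> card V" shows "HP V {} = {}"
proof -
  have False if "distinct xs" "set xs = V" "successively (\<lambda>x y. (x,y)\<in>({}::('a\<times>'a) set)) xs" for xs
  proof -
    have "length xs \<ge> 2" using that assms distinct_card by metis
    then obtain a b r where "xs = a # b # r" by (metis Suc_le_length_iff numeral_2_eq_2)
    thus False using that(3) by simp
  qed
  thus ?thesis unfolding HP_def by blast
qed

lemma finite_offd: "finite V \<Longrightarrow> finite (offd V)"
  by (rule finite_subset[of _ "V \<times> V"]) (auto simp: offd_def)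

lemma parity_aux: "(a::nat) + b + 2*c = d + e \<Longrightarrow> even d \<Longrightarrow> even e \<Longrightarrow> even (a+b)"
  by presburger

lemma main_aux:
  "finite V \<Longrightarrow> card V = n \<Longrightarrow> even (card (HP V F) + card (HP V (compl_edges V F)))"
proof (induction n arbitrary: V F rule: less_induct)
  case (less n V F)
  show ?case
  proof (cases "n \<le> 1")
    case True
    hence "HP V F = HP V (compl_edges V F)" using HP_small less.prems by blast
    thus ?thesis by simp
  next
    case False
    have inner: "\<forall>F. card (offd V - F) = k \<longrightarrow> even (card (HP V F) + card (HP V (compl_edges V F)))" for k
    proof (induction k)
      case 0
      show ?case
      proof (intro allI impI)
        fix F assume "card (offd V - F) = 0"
        hence sub: "offd V \<subseteq> F" using finite_offd[OF less.prems(1)] by auto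
        hence "HP V F = permutations_of_set V" by (rule HP_full)
        hence c1: "card (HP V F) = fact n" using less.prems by simp
        have "compl_edges V F = {}" using sub by (auto simp: compl_edges_def offd_def)
        hence c2: "card (HP V (compl_edges V F)) = 0" using HP_empty[of V] less.prems False by simp
        have "2 dvd (fact n :: nat)" using False by (intro dvd_fact) auto
        thus "even (card (HP V F) + card (HP V (compl_edges V F)))" using c1 c2 by simp
      qed
    next
      case (Suc k)
      show ?case
      proof (intro allI impI)
        fix F assume ck: "card (offd V - F) = Suc k"
        then obtain u v where e: "(u,v) \<in> offd V - F"
          by (metis card.empty ex_in_conv nat.distinct(1) surj_pair)
        have uv: "u \<in> V" "v \<in> V" "u \<noteq> v" "(u,v) \<notin> F" using e by (auto simp: offd_def)
        let ?F' = "insert (u,v) F"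
        have "offd V - ?F' = (offd V - F) - {(u,v)}" by blast
        hence "card (offd V - ?F') = k" using ck e finite_offd[OF less.prems(1)] by simp
        hence IH1: "even (card (HP V ?F') + card (HP V (compl_edges V ?F')))" using Suc.IH by blast
        let ?C = "con F u v"
        have p1: "card (HP V ?F') = card (HP V F) + card {xs\<in>HP V ?F'. uses u v xs}"
          by (rule partition_card) (rule uv(4))
        have conF': "con ?F' u v = ?C" using uv(3) by (auto simp: con_def)
        have a: "card {xs\<in>HP V ?F'. uses u v xs} = card (HP (V - {u}) ?C)"
          using contract_card[OF less.prems(1) uv(1,2,3), of ?F'] conF' by simp
        have ncF': "(u,v) \<notin> compl_edges V ?F'" by (simp add: compl_edges_def)
        have icF': "insert (u,v) (compl_edges V ?F') = compl_edges V F"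
          using uv by (auto simp: compl_edges_def)
        have p2: "card (HP V (compl_edges V F)) = card (HP V (compl_edges V ?F'))
             + card {xs\<in>HP V (compl_edges V F). uses u v xs}"
          using partition_card[OF ncF', of V] icF' by simp
        have ecF: "(u,v) \<in> compl_edges V F" using uv by (simp add: compl_edges_def)
        have "con (compl_edges V F) u v \<inter> offd (V - {u}) = compl_edges (V - {u}) ?C \<inter> offd (V - {u})"
          using uv by (auto simp: con_def compl_edges_def offd_def)
        hence "HP (V - {u}) (con (compl_edges V F) u v) = HP (V - {u}) (compl_edges (V - {u}) ?C)"
          by (rule HP_restrict)
        hence b: "card {xs\<in>HP V (compl_edges V F). uses u v xs} = card (HP (V - {u}) (compl_edges (V - {u}) ?C))"
          using contract_card[OF less.prems(1) uv(1,2,3) ecF] by simp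
        have "card (V - {u}) < n" using less.prems uv(1) False by (simp add: card_Diff_singleton)
        hence IH2: "even (card (HP (V - {u}) ?C) + card (HP (V - {u}) (compl_edges (V - {u}) ?C)))"
          using less.IH less.prems(1) by blast
        show "even (card (HP V F) + card (HP V (compl_edges V F)))"
        proof -
          have eq: "card (HP V F) + card (HP V (compl_edges V F)) + 2 * card (HP (V-{u}) ?C)
            = (card (HP V ?F') + card (HP V (compl_edges V ?F')))
              + (card (HP (V-{u}) ?C) + card (HP (V-{u}) (compl_edges (V-{u}) ?C)))"
            using p1 p2 a b by simp
          show ?thesis using parity_aux[OF eq IH1 IH2] .
        qed
      qed
    qed
    show ?thesis using inner by blast
  qed
qed

theorem mainTheorem16:
  fixes V :: "'a set" and E :: "('a \<times> 'a) set"
  assumes "digraph V E"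
  shows "even (card (ham_paths V E)) \<longleftrightarrow> even (card (ham_paths V (compl_edges V E)))"
proof -
  have "finite V" using assms by (simp add: digraph_def)
  hence "even (card (HP V E) + card (HP V (compl_edges V E)))" using main_aux by blast
  thus ?thesis unfolding ham_HP by simp
qed

end
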